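(* Let $\mathfrak T$ be a system with stateless maximal process space $\mathfrak S$, and let $f:2^{\mathfrak S}\to2^{\mathfrak S}$ be the operator interpreting $\langle\otimes\rangle$, namely $f(X)=\{(R,t)\in\mathfrak S:\exists M\in\mathcal X.\ M\sqsubseteq R\wedge(M,t)\in X\}$. Then $f$ is idempotent: $f(f(X))=f(X)$ for every $X\subseteq\mathfrak S$ (equivalently, $[\![\langle\otimes\rangle\langle\otimes\rangle\phi]\!]=[\![\langle\otimes\rangle\phi]\!]$ for every formula $\phi$ and valuation).
   Context: A system is $\mathfrak T=(S,s_0,T,I,\Sigma)$ with states $S$, initial state $s_0$, labels $\Sigma$, transitions $T\subseteq S\times\Sigma\times S$ and an irreflexive symmetric independence relation $I\subseteq T\times T$ (satisfying the transition-system-with-independence axioms). For $t=(s,a,s')$: $\sigma(t)=s,\tau(t)=s'$. Write $t\otimes t'$ iff $\sigma(t)=\sigma(t')$ and $tIt'$; $t\le t'$ iff $\tau(t)=\sigma(t')$ and not $tIt'$; $t\ominus t'$ iff $\tau(t)=\sigma(t')$ and $tIt'$. $\mathfrak X(s)$ is the set of transitions with source $s$ (maximal set). A conflict-free set is a set of transitions with a common source that are pairwise $\otimes$. A support set is a maximal set or a non-empty conflict-free set. For support sets, $M\sqsubseteq R$ iff $M\subseteq R$ and there is no $t\in R\setminus M$ with $t\otimes t'$ for all $t'\in M$. $\mathcal X$ is the set of all maximal sets $\mathfrak X(s)$ and all support sets $M$ with $M\sqsubseteq\mathfrak X(s)$ for some $s$ (maximal traces). $\mathfrak A=T\cup\{t_\epsilon\}$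 with $t_\epsilon$ a fresh empty transition. The stateless maximal process space is $\mathfrak S=\mathcal X\times\mathfrak A$. *)

theory Defs
  imports Main
begin

type_synonym ('s,'a) trans = "'s \<times> 'a \<times> 's"

definition src :: "('s,'a) trans \<Rightarrow> 's" where "src t = fst t"
definition tgt :: "('s,'a) trans \<Rightarrow> 's" where "tgt t = snd (snd t)"
definition lab :: "('s,'a) trans \<Rightarrow> 'a" where "lab t = fst (snd t)"

inductive tsim :: "(('s,'a) trans \<times> ('s,'a) trans) set \<Rightarrow> ('s,'a) trans \<Rightarrow> ('s,'a) trans \<Rightarrow> bool"
  for I where
  square: "((s,a,s1),(s,b,s2)) \<in> I \<Longrightarrow> ((s,a,s1),(s1,b,u)) \<in> I \<Longrightarrow> ((s,b,s2),(s2,a,u)) \<in> I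
     \<Longrightarrow> tsim I (s,a,s1) (s2,a,u)"
| refl: "tsim I t t"
| sym: "tsim I t t' \<Longrightarrow> tsim I t' t"
| trans: "tsim I t t' \<Longrightarrow> tsim I t' t'' \<Longrightarrow> tsim I t t''"

definition tsi :: "'s set \<Rightarrow> 's \<Rightarrow> ('s,'a) trans set \<Rightarrow> (('s,'a) trans \<times> ('s,'a) trans) set
   \<Rightarrow> 'a set \<Rightarrow> bool" where
  "tsi S s0 T I Sig \<longleftrightarrow>
     s0 \<in> S \<and> T \<subseteq> S \<times> Sig \<times> S \<and> I \<subseteq> T \<times> T \<and>
     irrefl I \<and> sym I \<and>
     (\<forall>s a s1 s2. (s,a,s1) \<in> T \<and> (s,a,s2) \<in> T \<longrightarrow> s1 = s2) \<and>
     (\<forall>s a s1 b s2. ((s,a,s1),(s,b,s2)) \<in> I \<longrightarrow>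
        (\<exists>u. ((s,a,s1),(s1,b,u)) \<in> I \<and> ((s,b,s2),(s2,a,u)) \<in> I)) \<and>
     (\<forall>s a s1 b u. ((s,a,s1),(s1,b,u)) \<in> I \<longrightarrow>
        (\<exists>s2. ((s,a,s1),(s,b,s2)) \<in> I \<and> ((s,b,s2),(s2,a,u)) \<in> I)) \<and>
     (\<forall>t t' w. tsim I t t' \<and> (t',w) \<in> I \<longrightarrow> (t,w) \<in> I)"

definition indep_conc :: "(('s,'a) trans \<times> ('s,'a) trans) set \<Rightarrow> ('s,'a) trans \<Rightarrow> ('s,'a) trans \<Rightarrow> bool" where
  "indep_conc I t t' \<longleftrightarrow> src t = src t' \<and> (t,t') \<in> I"

definition maxset :: "('s,'a) trans set \<Rightarrow> 's \<Rightarrow> ('s,'a) trans set" where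
  "maxset T s = {t \<in> T. src t = s}"

definition is_maxset :: "'s set \<Rightarrow> ('s,'a) trans set \<Rightarrow> ('s,'a) trans set \<Rightarrow> bool" where
  "is_maxset S T M \<longleftrightarrow> (\<exists>s\<in>S. M = maxset T s)"

definition conflict_free :: "('s,'a) trans set \<Rightarrow> (('s,'a) trans \<times> ('s,'a) trans) set
   \<Rightarrow> ('s,'a) trans set \<Rightarrow> bool" where
  "conflict_free T I M \<longleftrightarrow> M \<subseteq> T \<and> (\<exists>s. \<forall>t\<in>M. src t = s) \<and>
     (\<forall>t\<in>M. \<forall>t'\<in>M. t \<noteq> t' \<longrightarrow> indep_conc I t t')"

definition support_set :: "'s set \<Rightarrow> ('s,'a) trans set \<Rightarrow> (('s,'a) trans \<times> ('s,'a) trans) set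
   \<Rightarrow> ('s,'a) trans set \<Rightarrow> bool" where
  "support_set S T I M \<longleftrightarrow> is_maxset S T M \<or> (M \<noteq> {} \<and> conflict_free T I M)"

definition sqsub :: "(('s,'a) trans \<times> ('s,'a) trans) set \<Rightarrow> ('s,'a) trans set \<Rightarrow> ('s,'a) trans set \<Rightarrow> bool" where
  "sqsub I M R \<longleftrightarrow> M \<subseteq> R \<and> \<not> (\<exists>t \<in> R - M. \<forall>t' \<in> M. indep_conc I t t')"

definition Xsets :: "'s set \<Rightarrow> ('s,'a) trans set \<Rightarrow> (('s,'a) trans \<times> ('s,'a) trans) set
   \<Rightarrow> ('s,'a) trans set set" where
  "Xsets S T I = {M. is_maxset S T M} \<union>
     {M. support_set S T I M \<and> (\<exists>s\<in>S. sqsub I M (maxset T s))}"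

text \<open>\<open>\<AA> = T \<union> {t_\<epsilon>}\<close>, with \<open>None\<close> playing the role of the empty transition \<open>t_\<epsilon>\<close>.\<close>
definition Aset :: "('s,'a) trans set \<Rightarrow> ('s,'a) trans option set" where
  "Aset T = Some ` T \<union> {None}"

definition procspace :: "'s set \<Rightarrow> ('s,'a) trans set \<Rightarrow> (('s,'a) trans \<times> ('s,'a) trans) set
   \<Rightarrow> (('s,'a) trans set \<times> ('s,'a) trans option) set" where
  "procspace S T I = Xsets S T I \<times> Aset T"

definition conc_op :: "'s set \<Rightarrow> ('s,'a) trans set \<Rightarrow> (('s,'a) trans \<times> ('s,'a) trans) set
   \<Rightarrow> (('s,'a) trans set \<times> ('s,'a) trans option) set
   \<Rightarrow> (('s,'a) trans set \<times> ('s,'a) trans option) set" where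
  "conc_op S T I X = {(R,t) \<in> procspace S T I. \<exists>M \<in> Xsets S T I. sqsub I M R \<and> (M,t) \<in> X}"

end

theory Submission
  imports Defs
begin

lemma elem_src:
  assumes "R \<in> Xsets S T I" "t \<in> R"
  shows "t \<in> T"
  using assms unfolding Xsets_def support_set_def is_maxset_def maxset_def conflict_free_def
  by auto

lemma cf_sub_max:
  assumes "conflict_free T I R" "N = maxset T s" "t \<in> N" "t \<in> R"
  shows "R \<subseteq> N"
  using assms unfolding conflict_free_def maxset_def by auto

lemma key:
  assumes M: "M \<in> Xsets S T I" and N: "N \<in> Xsets S T I" and R: "R \<in> Xsets S T I"
    and MN: "sqsub I M N" and NR: "sqsub I N R"
  shows "M = N \<or> N = R"
proof -
  have MsN: "M \<subseteq> N" and NsR: "N \<subseteq> R" using MN NR unfolding sqsub_def by auto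
  show ?thesis
  proof (cases "N = {}")
    case True then show ?thesis using MsN by auto
  next
    case Nne: False
    then obtain t where tN: "t \<in> N" by auto
    have Ncases: "(\<exists>s. N = maxset T s) \<or> conflict_free T I N"
      using N unfolding Xsets_def support_set_def is_maxset_def by auto
    show ?thesis
    proof (cases "\<exists>s. N = maxset T s")
      case True
      then obtain s where Ns: "N = maxset T s" by auto
      have "R \<subseteq> N"
      proof -
        have "(\<exists>s'. R = maxset T s') \<or> conflict_free T I R"
          using R unfolding Xsets_def support_set_def is_maxset_def by auto
        then show ?thesis
        proof
          assume "\<exists>s'. R = maxset T s'"
          then obtain s' where "R = maxset T s'" by auto
          then show ?thesis using Ns tN NsR unfolding maxset_def by auto
        next
          assume "conflict_free T I R"
          then show ?thesis using cf_sub_max[OF _ Ns tN] tN NsR by auto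
        qed
      qed
      then show ?thesis using NsR by auto
    next
      case False
      then have cfN: "conflict_free T I N" using Ncases by blast
      have "N \<subseteq> M"
      proof
        fix x assume xN: "x \<in> N"
        show "x \<in> M"
        proof (rule ccontr)
          assume xM: "x \<notin> M"
          have "\<forall>t'\<in>M. indep_conc I x t'"
          proof
            fix t' assume "t' \<in> M"
            then have "t' \<in> N" "x \<noteq> t'" using MsN xM by auto
            then show "indep_conc I x t'" using cfN xN unfolding conflict_free_def by blast
          qed
          then show False using MN xN xM unfolding sqsub_def by blast
        qed
      qed
      then show ?thesis using MsN by auto
    qed
  qed
qed

theorem proposition1:
  fixes S :: "'s set" and s0 :: 's and Sig :: "'a set"
    and T :: "('s,'a) trans set" and I :: "(('s,'a) trans \<times> ('s,'a) trans) set"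
    and X :: "(('s,'a) trans set \<times> ('s,'a) trans option) set"
  assumes "tsi S s0 T I Sig"
    and "X \<subseteq> procspace S T I"
  shows "conc_op S T I (conc_op S T I X) = conc_op S T I X"
proof
  show "conc_op S T I (conc_op S T I X) \<subseteq> conc_op S T I X"
  proof
    fix p assume p: "p \<in> conc_op S T I (conc_op S T I X)"
    obtain R t where pe: "p = (R,t)" by (cases p)
    from p pe have Rp: "(R,t) \<in> procspace S T I" and
      "\<exists>N \<in> Xsets S T I. sqsub I N R \<and> (N,t) \<in> conc_op S T I X"
      unfolding conc_op_def by auto
    then obtain N where N: "N \<in> Xsets S T I" "sqsub I N R" "(N,t) \<in> conc_op S T I X" by auto
    then obtain M where M: "M \<in> Xsets S T I" "sqsub I M N" "(M,t) \<in> X"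
      unfolding conc_op_def by auto
    have R: "R \<in> Xsets S T I" using Rp unfolding procspace_def by auto
    have "M = N \<or> N = R" using key[OF M(1) N(1) R M(2) N(2)] .
    then have "sqsub I M R" using M N by auto
    then show "p \<in> conc_op S T I X" using pe Rp M unfolding conc_op_def by auto
  qed
next
  show "conc_op S T I X \<subseteq> conc_op S T I (conc_op S T I X)"
  proof
    fix p assume p: "p \<in> conc_op S T I X"
    obtain R t where pe: "p = (R,t)" by (cases p)
    have Rp: "(R,t) \<in> procspace S T I" using p pe unfolding conc_op_def by auto
    have R: "R \<in> Xsets S T I" using Rp unfolding procspace_def by auto
    have "sqsub I R R" unfolding sqsub_def by auto
    then show "p \<in> conc_op S T I (conc_op S T I X)"
      using R Rp p pe unfolding conc_op_def[of S T I "conc_op S T I X"] by auto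
  qed
qed

end
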